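(* If a propositional logic $\mathbf{L}$ is decidable, then it has an effective sequential approximation.
   Context: A propositional language $\mathcal{L}$ has variables $X_1,X_2,\ldots$ and finitely many connectives with arities; $\mathrm{Frm}(\mathcal{L})$ is the set of formulas. A propositional logic is a set $\mathbf{L}\subseteq\mathrm{Frm}(\mathcal{L})$ closed under substitution of formulas for variables. A finite-valued logic $\mathbf{M}$ is given by a finite set $V(\mathbf{M})$ of truth values, designated values $V^+(\mathbf{M})\subseteq V(\mathbf{M})$, and a truth function for each connective; valuations map variables to truth values and extend to formulas; a tautology is a formula designated under every valuation; $\mathrm{Taut}(\mathbf{M})$ is the set of tautologies; $\mathbf{M}_1\unlhd\mathbf{M}_2$ means $\mathrm{Taut}(\mathbf{M}_1)\subseteq\mathrm{Taut}(\mathbf{M}_2)$. A sequential approximation of $\mathbf{L}$ is a sequence $\langle\mathbf{M}_1,\mathbf{M}_2,\ldots\rangle$ of finite-valued logics over $\mathcal{L}$ such that $\mathbf{M}_i\unlhd\mathbf{M}_j$ whenever $i\ge j$, and $\mathbf{L}=\bigcap_j\mathrm{Taut}(\mathbf{M}_j)$. It is effective if the sequence is effectively enumerated (there is an algorithm producing, given $i$, the finite description of $\mathbf{M}_i$). *)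

theory Defs
  imports Main "HOL-Library.Nat_Bijection"
begin

datatype recf = Z | S | Id nat | Cn recf "recf list" | Pr recf recf | Mn recf

inductive rec_eval :: "recf \<Rightarrow> nat list \<Rightarrow> nat \<Rightarrow> bool" where
  ev_Z:  "rec_eval Z xs 0"
| ev_S:  "rec_eval S (x # xs) (Suc x)"
| ev_Id: "i < length xs \<Longrightarrow> rec_eval (Id i) xs (xs ! i)"
| ev_Cn: "length ys = length gs \<Longrightarrow> (\<forall>k < length gs. rec_eval (gs ! k) xs (ys ! k))
          \<Longrightarrow> rec_eval f ys z \<Longrightarrow> rec_eval (Cn f gs) xs z"
| ev_Pr0: "rec_eval g xs y \<Longrightarrow> rec_eval (Pr g h) (0 # xs) y"
| ev_PrS: "rec_eval (Pr g h) (n # xs) y \<Longrightarrow> rec_eval h (n # y # xs) z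
          \<Longrightarrow> rec_eval (Pr g h) (Suc n # xs) z"
| ev_Mn: "rec_eval f (n # xs) 0 \<Longrightarrow> (\<forall>m < n. \<exists>k. rec_eval f (m # xs) (Suc k))
          \<Longrightarrow> rec_eval (Mn f) xs n"

text \<open>A total unary function on nat is computable if it is (total) recursive.
Functions of several arguments are handled via the Cantor pairing prod_encode.\<close>
definition computable :: "(nat \<Rightarrow> nat) \<Rightarrow> bool" where
  "computable f \<longleftrightarrow> (\<exists>r. \<forall>x. rec_eval r [x] (f x))"

definition decidable_set :: "nat set \<Rightarrow> bool" where
  "decidable_set A \<longleftrightarrow> computable (\<lambda>x. if x \<in> A then 1 else 0)"

text \<open>A language is given by a list ar of arities: connective c (c < length ar)
has arity ar ! c. Variables X_1, X_2, ... are Var 0, Var 1, ...\<close>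
datatype frm = Var nat | App nat "frm list"

fun wf_frm :: "nat list \<Rightarrow> frm \<Rightarrow> bool" where
  "wf_frm ar (Var i) = True"
| "wf_frm ar (App c fs) = (c < length ar \<and> length fs = ar ! c \<and> (\<forall>f \<in> set fs. wf_frm ar f))"

definition Frm :: "nat list \<Rightarrow> frm set" where
  "Frm ar = {\<phi>. wf_frm ar \<phi>}"

fun subst :: "(nat \<Rightarrow> frm) \<Rightarrow> frm \<Rightarrow> frm" where
  "subst \<sigma> (Var i) = \<sigma> i"
| "subst \<sigma> (App c fs) = App c (map (subst \<sigma>) fs)"

definition is_logic :: "nat list \<Rightarrow> frm set \<Rightarrow> bool" where
  "is_logic ar L \<longleftrightarrow> L \<subseteq> Frm ar \<and>
     (\<forall>\<sigma> \<phi>. (\<forall>i. \<sigma> i \<in> Frm ar) \<longrightarrow> \<phi> \<in> L \<longrightarrow> subst \<sigma> \<phi> \<in> L)"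

fun frm_code :: "frm \<Rightarrow> nat" where
  "frm_code (Var i) = prod_encode (0, i)"
| "frm_code (App c fs) = prod_encode (Suc c, list_encode (map frm_code fs))"

definition decidable_logic :: "frm set \<Rightarrow> bool" where
  "decidable_logic L \<longleftrightarrow> decidable_set (frm_code ` L)"

text \<open>Truth values are 0, ..., nvals M - 1.\<close>
record fmatrix =
  nvals :: nat
  desig :: "nat set"
  tfun  :: "nat \<Rightarrow> nat list \<Rightarrow> nat"

definition is_matrix :: "nat list \<Rightarrow> fmatrix \<Rightarrow> bool" where
  "is_matrix ar M \<longleftrightarrow> 0 < nvals M \<and> desig M \<subseteq> {..<nvals M} \<and>
     (\<forall>c < length ar. \<forall>vs. length vs = ar ! c \<and> set vs \<subseteq> {..<nvals M}
         \<longrightarrow> tfun M c vs < nvals M)"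

fun val :: "fmatrix \<Rightarrow> (nat \<Rightarrow> nat) \<Rightarrow> frm \<Rightarrow> nat" where
  "val M v (Var i) = v i"
| "val M v (App c fs) = tfun M c (map (val M v) fs)"

definition Taut :: "nat list \<Rightarrow> fmatrix \<Rightarrow> frm set" where
  "Taut ar M = {\<phi> \<in> Frm ar. \<forall>v. (\<forall>i. v i < nvals M) \<longrightarrow> val M v \<phi> \<in> desig M}"

text \<open>Sequential approximation (indices start at 0 instead of 1).\<close>
definition seq_approx :: "nat list \<Rightarrow> frm set \<Rightarrow> (nat \<Rightarrow> fmatrix) \<Rightarrow> bool" where
  "seq_approx ar L Ms \<longleftrightarrow> (\<forall>j. is_matrix ar (Ms j)) \<and>
     (\<forall>i j. j \<le> i \<longrightarrow> Taut ar (Ms i) \<subseteq> Taut ar (Ms j)) \<and>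
     L = (\<Inter>j. Taut ar (Ms j))"

text \<open>Effective enumeration: the finite description of Ms i (number of values,
designated values, truth tables) is uniformly computable from i.\<close>
definition effective_seq :: "nat list \<Rightarrow> (nat \<Rightarrow> fmatrix) \<Rightarrow> bool" where
  "effective_seq ar Ms \<longleftrightarrow>
     computable (\<lambda>i. nvals (Ms i)) \<and>
     computable (\<lambda>p. if snd (prod_decode p) \<in> desig (Ms (fst (prod_decode p))) then 1 else 0) \<and>
     (\<exists>g. computable g \<and>
        (\<forall>i c vs. c < length ar \<and> length vs = ar ! c \<and> set vs \<subseteq> {..<nvals (Ms i)}
           \<longrightarrow> g (prod_encode (i, prod_encode (c, list_encode vs))) = tfun (Ms i) c vs))"

end

theory Submission
  imports Defs
begin


definition rc :: "nat \<Rightarrow> (nat list \<Rightarrow> nat) \<Rightarrow> bool" where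
  "rc n f \<longleftrightarrow> (\<exists>r. \<forall>xs. length xs = n \<longrightarrow> rec_eval r xs (f xs))"

primrec prec_fun :: "(nat list \<Rightarrow> nat) \<Rightarrow> (nat list \<Rightarrow> nat) \<Rightarrow> nat \<Rightarrow> nat list \<Rightarrow> nat" where
  "prec_fun g h 0 xs = g xs"
| "prec_fun g h (Suc k) xs = h (k # prec_fun g h k xs # xs)"

lemma rc_cong: "rc n f \<Longrightarrow> (\<And>xs. length xs = n \<Longrightarrow> f xs = g xs) \<Longrightarrow> rc n g"
  unfolding rc_def by metis

lemma rc_cong2: "rc n f \<Longrightarrow> n = m \<Longrightarrow> (\<And>xs. length xs = m \<Longrightarrow> f xs = g xs) \<Longrightarrow> rc m g"
  unfolding rc_def by metis

lemma rc_zero: "rc n (\<lambda>_. 0)"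
  unfolding rc_def using ev_Z by blast

lemma rc_proj: "i < n \<Longrightarrow> rc n (\<lambda>xs. xs ! i)"
  unfolding rc_def using ev_Id by metis

lemma rc_suc1: "rc 1 (\<lambda>xs. Suc (xs ! 0))"
  unfolding rc_def
proof (intro exI allI impI)
  fix xs :: "nat list" assume "length xs = 1"
  then obtain x where "xs = [x]" by (metis One_nat_def length_0_conv length_Suc_conv)
  then show "rec_eval S xs (Suc (xs ! 0))" using ev_S by simp
qed

lemma rc_comp:
  assumes "rc m f" "length gs = m" "\<forall>g\<in>set gs. rc n g"
  shows "rc n (\<lambda>xs. f (map (\<lambda>g. g xs) gs))"
proof -
  obtain rf where rf: "\<forall>xs. length xs = m \<longrightarrow> rec_eval rf xs (f xs)" using assms(1) rc_def by blast
  have "\<forall>k<length gs. \<exists>r. \<forall>xs. length xs = n \<longrightarrow> rec_eval r xs ((gs!k) xs)"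
    using assms(3) unfolding rc_def by auto
  then obtain R where R: "\<forall>k<length gs. \<forall>xs. length xs = n \<longrightarrow> rec_eval (R k) xs ((gs!k) xs)"
    by metis
  show ?thesis unfolding rc_def
  proof (intro exI allI impI)
    fix xs :: "nat list" assume xs: "length xs = n"
    show "rec_eval (Cn rf (map R [0..<length gs])) xs (f (map (\<lambda>g. g xs) gs))"
      by (rule ev_Cn[where ys="map (\<lambda>g. g xs) gs"]) (use rf R assms(2) xs in auto)
  qed
qed

lemma rc_prec:
  assumes "rc n g" "rc (Suc (Suc n)) h"
  shows "rc (Suc n) (\<lambda>xs. prec_fun g h (hd xs) (tl xs))"
proof -
  obtain rg where rg: "\<forall>xs. length xs = n \<longrightarrow> rec_eval rg xs (g xs)" using assms(1) rc_def by blast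
  obtain rh where rh: "\<forall>xs. length xs = Suc (Suc n) \<longrightarrow> rec_eval rh xs (h xs)" using assms(2) rc_def by blast
  have main: "rec_eval (Pr rg rh) (a # ys) (prec_fun g h a ys)" if "length ys = n" for a ys
  proof (induction a)
    case 0 then show ?case using rg that by (auto intro: ev_Pr0)
  next
    case (Suc a) then show ?case using rh that by (auto intro: ev_PrS)
  qed
  show ?thesis unfolding rc_def
  proof (intro exI allI impI)
    fix xs :: "nat list" assume "length xs = Suc n"
    then obtain a ys where "xs = a # ys" "length ys = n" by (metis length_Suc_conv)
    then show "rec_eval (Pr rg rh) xs (prec_fun g h (hd xs) (tl xs))" using main by simp
  qed
qed

lemma rc_mn:
  assumes "rc (Suc n) f" "\<And>xs. length xs = n \<Longrightarrow> \<exists>y. f (y # xs) = 0"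
  shows "rc n (\<lambda>xs. LEAST y. f (y # xs) = 0)"
proof -
  obtain rf where rf: "\<forall>xs. length xs = Suc n \<longrightarrow> rec_eval rf xs (f xs)" using assms(1) rc_def by blast
  show ?thesis unfolding rc_def
  proof (intro exI allI impI)
    fix xs :: "nat list" assume xs: "length xs = n"
    define N where "N = (LEAST y. f (y # xs) = 0)"
    have "f (N # xs) = 0" unfolding N_def using assms(2)[OF xs] by (rule LeastI_ex)
    moreover have "\<forall>m<N. \<exists>k. rec_eval rf (m # xs) (Suc k)"
    proof (intro allI impI)
      fix m assume "m < N"
      then have "f (m # xs) \<noteq> 0" unfolding N_def by (rule not_less_Least)
      then have "f (m # xs) = Suc (f (m # xs) - 1)" by simp
      then show "\<exists>k. rec_eval rf (m # xs) (Suc k)" using rf xs by (metis length_Cons)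
    qed
    ultimately show "rec_eval (Mn rf) xs (LEAST y. f (y # xs) = 0)"
      unfolding N_def[symmetric] using rf xs by (intro ev_Mn) (metis length_Cons, auto)
  qed
qed

lemma rc_comp1: "rc 1 f \<Longrightarrow> rc n g \<Longrightarrow> rc n (\<lambda>xs. f [g xs])"
  using rc_comp[of 1 f "[g]" n] by simp

lemma rc_comp2: "rc 2 f \<Longrightarrow> rc n g \<Longrightarrow> rc n h \<Longrightarrow> rc n (\<lambda>xs. f [g xs, h xs])"
  using rc_comp[of 2 f "[g, h]" n] by simp

lemma rc_Suc: "rc n f \<Longrightarrow> rc n (\<lambda>xs. Suc (f xs))"
  using rc_comp1[OF rc_suc1] by simp

lemma rc_const: "rc n (\<lambda>_. k)"
  by (induction k) (auto intro: rc_zero rc_Suc)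

lemma rc_reindex:
  assumes "rc m f" "\<forall>i<m. idx i < n"
  shows "rc n (\<lambda>xs. f (map (\<lambda>i. xs ! idx i) [0..<m]))"
proof -
  have "rc n (\<lambda>xs. f (map (\<lambda>g. g xs) (map (\<lambda>i xs. xs ! idx i) [0..<m])))"
    by (rule rc_comp[OF assms(1)]) (use assms(2) rc_proj in auto)
  then show ?thesis by (simp add: comp_def)
qed

lemma rc_tl: "rc n f \<Longrightarrow> rc (Suc n) (\<lambda>xs. f (tl xs))"
proof -
  assume "rc n f"
  then have "rc (Suc n) (\<lambda>xs. f (map (\<lambda>i. xs ! Suc i) [0..<n]))"
    by (rule rc_reindex) auto
  then show ?thesis
  proof (rule rc_cong)
    fix xs :: "nat list" assume "length xs = Suc n"
    then have "map (\<lambda>i. xs ! Suc i) [0..<n] = tl xs"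
      by (intro nth_equalityI) (auto simp: nth_tl)
    then show "f (map (\<lambda>i. xs ! Suc i) [0..<n]) = f (tl xs)" by simp
  qed
qed

lemma len1_eq: "length xs = Suc 0 \<Longrightarrow> xs = [xs ! 0]"
  by (cases xs) auto

lemma len2_eq: "length xs = Suc (Suc 0) \<Longrightarrow> xs = [xs ! 0, xs ! 1]"
  by (cases xs; cases "tl xs") auto

lemma len2E: "length xs = 2 \<Longrightarrow> (\<And>a b. xs = [a, b] \<Longrightarrow> P) \<Longrightarrow> P"
  by (metis len2_eq numeral_2_eq_2)

lemma len1E: "length xs = Suc 0 \<Longrightarrow> (\<And>a. xs = [a] \<Longrightarrow> P) \<Longrightarrow> P"
  by (metis len1_eq)

lemma rc_add2: "rc 2 (\<lambda>xs. xs ! 0 + xs ! 1)"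
proof -
  have "rc (Suc 1) (\<lambda>xs. prec_fun (\<lambda>ys. ys ! 0) (\<lambda>zs. Suc (zs ! 1)) (hd xs) (tl xs))"
    by (rule rc_prec) (rule rc_proj, simp, intro rc_Suc rc_proj, simp)
  moreover have "prec_fun (\<lambda>ys. ys ! 0) (\<lambda>zs. Suc (zs ! 1)) a ys = a + ys ! 0" for a ys
    by (induction a) auto
  ultimately show ?thesis
    by (elim rc_cong2) (simp, auto elim: len2E)
qed

lemma rc_add: "rc n f \<Longrightarrow> rc n g \<Longrightarrow> rc n (\<lambda>xs. f xs + g xs)"
  using rc_comp2[OF rc_add2] by simp

lemma rc_mult2: "rc 2 (\<lambda>xs. xs ! 0 * xs ! 1)"
proof -
  have "rc (Suc 1) (\<lambda>xs. prec_fun (\<lambda>ys. 0) (\<lambda>zs. zs ! 1 + zs ! 2) (hd xs) (tl xs))"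
    by (rule rc_prec) (rule rc_zero, intro rc_add rc_proj, simp, simp)
  moreover have "prec_fun (\<lambda>ys. 0) (\<lambda>zs. zs ! 1 + zs ! 2) a ys = a * ys ! 0" for a ys
    by (induction a) auto
  ultimately show ?thesis
    by (elim rc_cong2) (simp, auto elim: len2E)
qed

lemma rc_mult: "rc n f \<Longrightarrow> rc n g \<Longrightarrow> rc n (\<lambda>xs. f xs * g xs)"
  using rc_comp2[OF rc_mult2] by simp

lemma rc_pred1: "rc 1 (\<lambda>xs. xs ! 0 - 1)"
proof -
  have "rc (Suc 0) (\<lambda>xs. prec_fun (\<lambda>ys. 0) (\<lambda>zs. zs ! 0) (hd xs) (tl xs))"
    by (rule rc_prec) (rule rc_zero, intro rc_proj, simp)
  moreover have "prec_fun (\<lambda>ys. 0) (\<lambda>zs. zs ! 0) a ys = a - 1" for a ys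
    by (induction a) auto
  ultimately show ?thesis
    by (elim rc_cong2) (simp, auto elim: len1E)
qed

lemma rc_pred: "rc n f \<Longrightarrow> rc n (\<lambda>xs. f xs - 1)"
  using rc_comp1[OF rc_pred1] by simp

lemma rc_sub2: "rc 2 (\<lambda>xs. xs ! 1 - xs ! 0)"
proof -
  have "rc (Suc 1) (\<lambda>xs. prec_fun (\<lambda>ys. ys ! 0) (\<lambda>zs. zs ! 1 - 1) (hd xs) (tl xs))"
    by (rule rc_prec) (rule rc_proj, simp, intro rc_pred rc_proj, simp)
  moreover have "prec_fun (\<lambda>ys. ys ! 0) (\<lambda>zs. zs ! 1 - 1) a ys = ys ! 0 - a" for a ys
    by (induction a) auto
  ultimately show ?thesis
    by (elim rc_cong2) (simp, auto elim: len2E)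
qed

lemma rc_sub: "rc n f \<Longrightarrow> rc n g \<Longrightarrow> rc n (\<lambda>xs. f xs - g xs)"
  using rc_comp2[OF rc_sub2, of n g f] by simp

lemma rc_pow2: "rc 2 (\<lambda>xs. xs ! 1 ^ xs ! 0)"
proof -
  have "rc (Suc 1) (\<lambda>xs. prec_fun (\<lambda>ys. 1) (\<lambda>zs. zs ! 1 * zs ! 2) (hd xs) (tl xs))"
    by (rule rc_prec) (rule rc_const, intro rc_mult rc_proj, simp, simp)
  moreover have "prec_fun (\<lambda>ys. 1) (\<lambda>zs. zs ! 1 * zs ! 2) a ys = ys ! 0 ^ a" for a ys
    by (induction a) (auto simp: mult.commute)
  ultimately show ?thesis
    by (elim rc_cong2) (simp, auto elim: len2E)
qed

lemma rc_pow: "rc n f \<Longrightarrow> rc n g \<Longrightarrow> rc n (\<lambda>xs. f xs ^ g xs)"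
  using rc_comp2[OF rc_pow2, of n g f] by simp

definition rcp :: "nat \<Rightarrow> (nat list \<Rightarrow> bool) \<Rightarrow> bool" where
  "rcp n P \<longleftrightarrow> rc n (\<lambda>xs. if P xs then 1 else 0)"

lemma rcp_less: "rc n f \<Longrightarrow> rc n g \<Longrightarrow> rcp n (\<lambda>xs. f xs < g xs)"
  unfolding rcp_def
  by (rule rc_cong[where f="\<lambda>xs. 1 - (1 - (g xs - f xs))"]) (auto intro!: rc_sub rc_const)

lemma rcp_eq: "rc n f \<Longrightarrow> rc n g \<Longrightarrow> rcp n (\<lambda>xs. f xs = g xs)"
  unfolding rcp_def
  by (rule rc_cong[where f="\<lambda>xs. 1 - ((f xs - g xs) + (g xs - f xs))"]) (auto intro!: rc_sub rc_add rc_const)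

lemma rcp_not: "rcp n P \<Longrightarrow> rcp n (\<lambda>xs. \<not> P xs)"
  unfolding rcp_def
  by (rule rc_cong[where f="\<lambda>xs. 1 - (if P xs then 1 else 0)"]) (auto intro!: rc_sub rc_const)

lemma rcp_and: "rcp n P \<Longrightarrow> rcp n Q \<Longrightarrow> rcp n (\<lambda>xs. P xs \<and> Q xs)"
  unfolding rcp_def
  by (rule rc_cong[where f="\<lambda>xs. (if P xs then 1 else 0) * (if Q xs then 1 else 0)"]) (auto intro!: rc_mult)

lemma rcp_or: "rcp n P \<Longrightarrow> rcp n Q \<Longrightarrow> rcp n (\<lambda>xs. P xs \<or> Q xs)"
  using rcp_not[OF rcp_and[OF rcp_not rcp_not], of n P Q] by simp

lemma rcp_imp: "rcp n P \<Longrightarrow> rcp n Q \<Longrightarrow> rcp n (\<lambda>xs. P xs \<longrightarrow> Q xs)"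
  using rcp_or[OF rcp_not, of n P Q] by simp

lemma rcp_le: "rc n f \<Longrightarrow> rc n g \<Longrightarrow> rcp n (\<lambda>xs. f xs \<le> g xs)"
  using rcp_less[OF _ rc_Suc, of n f g] by (simp add: less_Suc_eq_le)

lemma rc_if: "rcp n P \<Longrightarrow> rc n f \<Longrightarrow> rc n g \<Longrightarrow> rc n (\<lambda>xs. if P xs then f xs else g xs)"
  unfolding rcp_def
  by (rule rc_cong[where f="\<lambda>xs. (if P xs then 1 else 0) * f xs + (1 - (if P xs then 1 else 0)) * g xs"])
     (auto intro!: rc_mult rc_add rc_sub rc_const)

lemma rc_least:
  assumes "rcp (Suc n) P" "\<And>xs. length xs = n \<Longrightarrow> \<exists>y. P (y # xs)"
  shows "rc n (\<lambda>xs. LEAST y. P (y # xs))"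
proof -
  have "rc (Suc n) (\<lambda>xs. if P xs then 0 else 1)"
    by (rule rc_if[OF assms(1)]) (auto intro: rc_const)
  then have "rc n (\<lambda>xs. LEAST y. (if P (y # xs) then 0 else 1) = (0::nat))"
    by (rule rc_mn) (use assms(2) in force)
  moreover have "(LEAST y. (if P (y # xs) then 0 else 1) = (0::nat)) = (LEAST y. P (y # xs))" for xs
    by (rule arg_cong[where f=Least]) auto
  ultimately show ?thesis by simp
qed

lemma rcp_ball:
  assumes "rcp (Suc n) P" "rc n b"
  shows "rcp n (\<lambda>xs. \<forall>k<b xs. P (k # xs))"
proof -
  let ?c = "\<lambda>xs. if P xs then 1 else (0::nat)"
  define idx where "idx = (\<lambda>i::nat. if i = 0 then 0 else Suc i)"
  have r1: "rc (Suc (Suc n)) (\<lambda>zs. ?c (map (\<lambda>i. zs ! idx i) [0..<Suc n]))"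
    using assms(1) unfolding rcp_def by (rule rc_reindex) (auto simp: idx_def)
  have r2: "map (\<lambda>i. zs ! idx i) [0..<Suc n] = zs ! 0 # tl (tl zs)" if "length zs = Suc (Suc n)" for zs
    using that by (intro nth_equalityI) (auto simp: idx_def nth_Cons' nth_tl simp del: upt_Suc)
  have "rc (Suc (Suc n)) (\<lambda>zs. ?c (zs ! 0 # tl (tl zs)))"
    by (rule rc_cong[OF r1]) (simp only: r2)
  then have h: "rc (Suc (Suc n)) (\<lambda>zs. zs ! 1 * ?c (zs ! 0 # tl (tl zs)))"
    by (intro rc_mult rc_proj) auto
  have q: "rc (Suc n) (\<lambda>xs. prec_fun (\<lambda>_. 1) (\<lambda>zs. zs ! 1 * ?c (zs ! 0 # tl (tl zs))) (hd xs) (tl xs))"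
    by (rule rc_prec[OF rc_const h])
  have qv: "prec_fun (\<lambda>_. 1) (\<lambda>zs. zs ! 1 * ?c (zs ! 0 # tl (tl zs))) j xs = (if \<forall>k<j. P (k # xs) then 1 else 0)" for j xs
    by (induction j) (auto simp: less_Suc_eq)
  have "rc n (\<lambda>xs. (\<lambda>ys. prec_fun (\<lambda>_. 1) (\<lambda>zs. zs ! 1 * ?c (zs ! 0 # tl (tl zs))) (hd ys) (tl ys))
           (map (\<lambda>g. g xs) (b # map (\<lambda>i xs. xs ! i) [0..<n])))"
    by (rule rc_comp[OF q]) (auto intro: assms(2) rc_proj)
  then show ?thesis unfolding rcp_def
  proof (rule rc_cong)
    fix xs :: "nat list" assume "length xs = n"
    then have "map (\<lambda>g. g xs) (map (\<lambda>i xs. xs ! i) [0..<n]) = xs"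
      by (intro nth_equalityI) auto
    then have e: "map (\<lambda>g. g xs) (b # map (\<lambda>i xs. xs ! i) [0..<n]) = b xs # xs" by simp
    then show "(\<lambda>ys. prec_fun (\<lambda>_. 1) (\<lambda>zs. zs ! 1 * ?c (zs ! 0 # tl (tl zs))) (hd ys) (tl ys))
           (map (\<lambda>g. g xs) (b # map (\<lambda>i xs. xs ! i) [0..<n])) = (if \<forall>k<b xs. P (k # xs) then 1 else 0)"
      unfolding e by (simp only: list.sel qv)
  qed
qed

lemma rc_computable: "computable h \<Longrightarrow> rc n f \<Longrightarrow> rc n (\<lambda>xs. h (f xs))"
proof -
  assume "computable h" "rc n f"
  have "rc 1 (\<lambda>xs. h (xs ! 0))" using `computable h` unfolding computable_def rc_def
    by (metis len1_eq One_nat_def)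
  from rc_comp1[OF this `rc n f`] show ?thesis by simp
qed

lemma computable_rc: "rc 1 (\<lambda>xs. h (xs ! 0)) \<Longrightarrow> computable h"
  unfolding computable_def rc_def by (metis One_nat_def length_Cons list.size(3) nth_Cons_0)



lemma rc_div: assumes "rc n f" "rc n g" shows "rc n (\<lambda>xs. f xs div g xs)"
proof -
  have "rcp (Suc n) (\<lambda>ys. f (tl ys) < g (tl ys) * Suc (ys ! 0) \<or> g (tl ys) = 0)"
    by (intro rcp_or rcp_less rcp_eq rc_mult rc_Suc rc_tl assms rc_proj rc_const) simp
  then have "rc n (\<lambda>xs. LEAST y. f (tl (y # xs)) < g (tl (y # xs)) * Suc ((y # xs) ! 0) \<or> g (tl (y # xs)) = 0)"
  proof (rule rc_least)
    fix xs :: "nat list"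
    show "\<exists>y. f (tl (y # xs)) < g (tl (y # xs)) * Suc ((y # xs) ! 0) \<or> g (tl (y # xs)) = 0"
      by (rule exI[of _ "f xs"]) (cases "g xs", auto)
  qed
  then show ?thesis
  proof (rule rc_cong)
    fix xs :: "nat list"
    show "(LEAST y. f (tl (y # xs)) < g (tl (y # xs)) * Suc ((y # xs) ! 0) \<or> g (tl (y # xs)) = 0) = f xs div g xs"
    proof (cases "g xs = 0")
      case True then show ?thesis by simp
    next
      case False
      show ?thesis
      proof (rule Least_equality)
        show "f (tl (f xs div g xs # xs)) < g (tl (f xs div g xs # xs)) * Suc ((f xs div g xs # xs) ! 0) \<or> g (tl (f xs div g xs # xs)) = 0"
        proof -
          have m: "f xs mod g xs < g xs" using False by simp
          have "g xs * (f xs div g xs) + f xs mod g xs = f xs" by (rule mult_div_mod_eq)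
          then have "f xs < g xs * Suc (f xs div g xs)" using m by (simp only: mult_Suc_right)
          then show ?thesis by simp
        qed
      next
        fix y assume "f (tl (y # xs)) < g (tl (y # xs)) * Suc ((y # xs) ! 0) \<or> g (tl (y # xs)) = 0"
        then have "f xs < Suc y * g xs" using False by (simp add: mult.commute)
        then have "f xs div g xs < Suc y" by (rule less_mult_imp_div_less)
        then show "f xs div g xs \<le> y" by simp
      qed
    qed
  qed
qed

lemma rc_mod: assumes "rc n f" "rc n g" shows "rc n (\<lambda>xs. f xs mod g xs)"
proof (rule rc_cong[where f="\<lambda>xs. f xs - g xs * (f xs div g xs)"])
  show "rc n (\<lambda>xs. f xs - g xs * (f xs div g xs))" by (intro rc_sub rc_mult rc_div assms)
  fix xs :: "nat list"
  have "g xs * (f xs div g xs) + f xs mod g xs = f xs" by (rule mult_div_mod_eq)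
  then show "f xs - g xs * (f xs div g xs) = f xs mod g xs" by linarith
qed

lemma rc_triangle: "rc n f \<Longrightarrow> rc n (\<lambda>xs. triangle (f xs))"
  unfolding triangle_def by (intro rc_div rc_mult rc_Suc rc_const)

lemma rc_penc: "rc n f \<Longrightarrow> rc n g \<Longrightarrow> rc n (\<lambda>xs. prod_encode (f xs, g xs))"
  unfolding prod_encode_def by (simp, intro rc_add rc_triangle)

definition Kd :: "nat \<Rightarrow> nat" where "Kd m = (LEAST k. m < triangle (Suc k))"

lemma Kd_ex: "m < triangle (Suc m)"
  by (induction m) auto

lemma prod_decode_Kd: "prod_decode m = (m - triangle (Kd m), Kd m - (m - triangle (Kd m)))"
proof -
  let ?k = "Kd m"
  have lt: "m < triangle (Suc ?k)" unfolding Kd_def using Kd_ex by (rule LeastI)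
  have ge: "triangle ?k \<le> m"
  proof (cases ?k)
    case 0 then show ?thesis by simp
  next
    case (Suc j)
    then have "j < ?k" by simp
    then have "\<not> m < triangle (Suc j)" unfolding Kd_def by (rule not_less_Least)
    then show ?thesis using Suc by simp
  qed
  let ?a = "m - triangle ?k"
  have "?a \<le> ?k" using lt ge by simp
  then have "prod_encode (?a, ?k - ?a) = m" using ge by (simp add: prod_encode_def)
  then show ?thesis by (metis prod_encode_inverse)
qed

lemma computable_Kd: "computable Kd"
proof (rule computable_rc)
  have "rcp (Suc 1) (\<lambda>ys. ys ! 1 < triangle (Suc (ys ! 0)))"
    by (intro rcp_less rc_triangle rc_Suc rc_proj) auto
  then have "rc 1 (\<lambda>xs. LEAST y. (y # xs) ! 1 < triangle (Suc ((y # xs) ! 0)))"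
  proof (rule rc_least)
    fix xs :: "nat list"
    show "\<exists>y. (y # xs) ! 1 < triangle (Suc ((y # xs) ! 0))"
      by (rule exI[of _ "xs ! 0"]) (simp add: Kd_ex)
  qed
  then show "rc 1 (\<lambda>xs. Kd (xs ! 0))"
    by (rule rc_cong) (simp add: Kd_def)
qed

lemma rc_pfst: "rc n f \<Longrightarrow> rc n (\<lambda>xs. fst (prod_decode (f xs)))"
  by (subst prod_decode_Kd, simp, intro rc_sub rc_triangle rc_computable[OF computable_Kd])

lemma rc_psnd: "rc n f \<Longrightarrow> rc n (\<lambda>xs. snd (prod_decode (f xs)))"
  by (subst prod_decode_Kd, simp, intro rc_sub rc_triangle rc_computable[OF computable_Kd])



definition W :: "nat list \<Rightarrow> nat set" where "W ar = frm_code ` Frm ar"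

lemma list_encode_ge_length: "length xs \<le> list_encode xs"
  by (induction xs) (auto intro: order.trans[OF _ le_prod_encode_2])

lemma list_encode_gt_elem: "y \<in> set xs \<Longrightarrow> y < list_encode xs"
proof (induction xs)
  case (Cons a xs)
  then show ?case using le_prod_encode_1[where a=a and b="list_encode xs"] le_prod_encode_2[where a=a and b="list_encode xs"]
    by (auto simp: less_Suc_eq_le)
qed simp

lemma length_list_decode_le: "length (list_decode l) \<le> l"
  using list_encode_ge_length[of "list_decode l"] by simp

lemma list_decode_elem_less: "y \<in> set (list_decode l) \<Longrightarrow> y < l"
  using list_encode_gt_elem[of y "list_decode l"] by simp

lemma W_char: "x \<in> W ar \<longleftrightarrow> (case prod_decode x of (0, i) \<Rightarrow> True
   | (Suc c, l) \<Rightarrow> c < length ar \<and> length (list_decode l) = ar ! c \<and> (\<forall>y\<in>set (list_decode l). y \<in> W ar))"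
proof
  assume "x \<in> W ar"
  then obtain \<phi> where \<phi>: "wf_frm ar \<phi>" "x = frm_code \<phi>" unfolding W_def Frm_def by auto
  show "case prod_decode x of (0, i) \<Rightarrow> True
   | (Suc c, l) \<Rightarrow> c < length ar \<and> length (list_decode l) = ar ! c \<and> (\<forall>y\<in>set (list_decode l). y \<in> W ar)"
  proof (cases \<phi>)
    case (Var i) then show ?thesis using \<phi> by simp
  next
    case (App c fs) then show ?thesis using \<phi> by (auto simp: W_def Frm_def)
  qed
next
  assume H: "case prod_decode x of (0, i) \<Rightarrow> True
   | (Suc c, l) \<Rightarrow> c < length ar \<and> length (list_decode l) = ar ! c \<and> (\<forall>y\<in>set (list_decode l). y \<in> W ar)"
  obtain a l where al: "prod_decode x = (a, l)" by fastforce
  then have x: "x = prod_encode (a, l)" by (metis prod_decode_inverse)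
  show "x \<in> W ar"
  proof (cases a)
    case 0
    then have "x = frm_code (Var l)" using x by simp
    then show ?thesis unfolding W_def Frm_def by (intro image_eqI[where x="Var l"]) auto
  next
    case (Suc c)
    with H al have c: "c < length ar" "length (list_decode l) = ar ! c" "\<forall>y\<in>set (list_decode l). y \<in> W ar"
      by auto
    define ps where "ps = map (inv_into (Frm ar) frm_code) (list_decode l)"
    have mc: "map frm_code ps = list_decode l"
      unfolding ps_def map_map by (rule map_idI) (use c(3) in \<open>auto simp: W_def intro: f_inv_into_f\<close>)
    have "\<forall>p\<in>set ps. wf_frm ar p"
    proof
      fix p assume "p \<in> set ps"
      then obtain y where "y \<in> set (list_decode l)" "p = inv_into (Frm ar) frm_code y" unfolding ps_def by auto
      then have "p \<in> Frm ar" using c(3) by (auto simp: W_def intro: inv_into_into)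
      then show "wf_frm ar p" by (simp add: Frm_def)
    qed
    moreover have "length ps = ar ! c" using c(2) unfolding ps_def by simp
    ultimately have "wf_frm ar (App c ps)" using c(1) by simp
    moreover have "frm_code (App c ps) = x" using mc x Suc by simp
    ultimately show ?thesis unfolding W_def Frm_def by (intro image_eqI[where x="App c ps"]) auto
  qed
qed

definition tl_c :: "nat \<Rightarrow> nat" where "tl_c l = (if l = 0 then 0 else snd (prod_decode (l - 1)))"
definition hd_c :: "nat \<Rightarrow> nat" where "hd_c l = fst (prod_decode (l - 1))"
definition Tl :: "nat \<Rightarrow> nat \<Rightarrow> nat" where "Tl k l = (tl_c ^^ k) l"

lemma list_decode_tl_c: "list_decode (tl_c m) = tl (list_decode m)"
  by (cases m) (auto simp: tl_c_def split: prod.split)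

lemma hd_c_list_decode: "list_decode m \<noteq> [] \<Longrightarrow> hd_c m = hd (list_decode m)"
  by (cases m) (auto simp: hd_c_def split: prod.split)

lemma list_decode_Tl: "list_decode (Tl k l) = drop k (list_decode l)"
  by (induction k) (auto simp: Tl_def list_decode_tl_c drop_Suc tl_drop)

lemma list_decode_Nil_iff: "list_decode x = [] \<longleftrightarrow> x = 0"
  by (metis list.size(3) list_decode.simps(1) list_decode_inverse list_encode.simps(1))

lemma Tl_zero_iff: "Tl k l = 0 \<longleftrightarrow> length (list_decode l) \<le> k"
  using list_decode_Tl[of k l] list_decode_Nil_iff[of "Tl k l"] by simp

lemma hd_c_Tl: "k < length (list_decode l) \<Longrightarrow> hd_c (Tl k l) = list_decode l ! k"
  by (subst hd_c_list_decode) (auto simp: list_decode_Tl hd_drop_conv_nth)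

lemma rc_tl_c: "rc n f \<Longrightarrow> rc n (\<lambda>xs. tl_c (f xs))"
  unfolding tl_c_def by (intro rc_if rcp_eq rc_const rc_psnd rc_pred)

lemma rc_hd_c: "rc n f \<Longrightarrow> rc n (\<lambda>xs. hd_c (f xs))"
  unfolding hd_c_def by (intro rc_pfst rc_pred)

lemma rc_Tl2: "rc 2 (\<lambda>xs. Tl (xs ! 0) (xs ! 1))"
proof -
  have "rc (Suc 1) (\<lambda>xs. prec_fun (\<lambda>ys. ys ! 0) (\<lambda>zs. tl_c (zs ! 1)) (hd xs) (tl xs))"
    by (rule rc_prec) (rule rc_proj, simp, intro rc_tl_c rc_proj, simp)
  moreover have "prec_fun (\<lambda>ys. ys ! 0) (\<lambda>zs. tl_c (zs ! 1)) a ys = Tl a (ys ! 0)" for a ys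
    by (induction a) (auto simp: Tl_def)
  ultimately show ?thesis
    by (elim rc_cong2) (simp, auto elim: len2E)
qed

lemma rc_Tl: "rc n f \<Longrightarrow> rc n g \<Longrightarrow> rc n (\<lambda>xs. Tl (f xs) (g xs))"
  using rc_comp2[OF rc_Tl2] by simp

lemma rc_len: assumes "rc n f" shows "rc n (\<lambda>xs. length (list_decode (f xs)))"
proof -
  have "rcp (Suc n) (\<lambda>ys. Tl (ys ! 0) (f (tl ys)) = 0)"
    by (intro rcp_eq rc_Tl rc_proj rc_tl assms rc_const) simp
  then have "rc n (\<lambda>xs. LEAST y. Tl ((y # xs) ! 0) (f (tl (y # xs))) = 0)"
  proof (rule rc_least)
    fix xs :: "nat list"
    show "\<exists>y. Tl ((y # xs) ! 0) (f (tl (y # xs))) = 0"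
      by (rule exI[of _ "length (list_decode (f xs))"]) (simp add: Tl_zero_iff)
  qed
  then show ?thesis
    by (rule rc_cong) (auto simp: Tl_zero_iff intro!: Least_equality)
qed

definition tab :: "nat list \<Rightarrow> nat \<Rightarrow> nat" where
  "tab ar c = (if c < length ar then Suc (ar ! c) else 0)"

lemma rc_tab: "rc n f \<Longrightarrow> rc n (\<lambda>xs. tab ar (f xs))"
proof (induction ar arbitrary: f)
  case Nil then show ?case by (simp add: tab_def rc_const)
next
  case (Cons a ar)
  have "rc n (\<lambda>xs. if f xs = 0 then Suc a else tab ar (f xs - 1))"
    by (intro rc_if rcp_eq Cons rc_const rc_pred)
  then show ?case
    by (rule rc_cong) (auto simp: tab_def nth_Cons')
qed

definition Fc :: "nat list \<Rightarrow> nat \<Rightarrow> nat \<Rightarrow> nat" where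
  "Fc ar x H = (if fst (prod_decode x) = 0 then 1 else
     if Suc (length (list_decode (snd (prod_decode x)))) = tab ar (fst (prod_decode x) - 1)
        \<and> (\<forall>k<snd (prod_decode x). Tl k (snd (prod_decode x)) \<noteq> 0 \<longrightarrow>
              H div 2 ^ hd_c (Tl k (snd (prod_decode x))) mod 2 = 1) then 1 else 0)"

lemma rc_Fc2: "rc 2 (\<lambda>xs. Fc ar (xs ! 0) (xs ! 1))"
proof -
  have b: "rcp 2 (\<lambda>xs. \<forall>k<snd (prod_decode (xs ! 0)). (\<lambda>ys. Tl (ys ! 0) (snd (prod_decode (ys ! 1))) \<noteq> 0 \<longrightarrow>
              ys ! 2 div 2 ^ hd_c (Tl (ys ! 0) (snd (prod_decode (ys ! 1)))) mod 2 = 1) (k # xs))"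
    by (intro rcp_ball rcp_imp rcp_not rcp_eq rc_Tl rc_proj rc_psnd rc_mod rc_div rc_pow rc_hd_c rc_const) auto
  have "rc 2 (\<lambda>xs. if fst (prod_decode (xs ! 0)) = 0 then 1 else
     if Suc (length (list_decode (snd (prod_decode (xs ! 0))))) = tab ar (fst (prod_decode (xs ! 0)) - 1)
        \<and> (\<forall>k<snd (prod_decode (xs ! 0)). (\<lambda>ys. Tl (ys ! 0) (snd (prod_decode (ys ! 1))) \<noteq> 0 \<longrightarrow>
              ys ! 2 div 2 ^ hd_c (Tl (ys ! 0) (snd (prod_decode (ys ! 1)))) mod 2 = 1) (k # xs)) then 1 else 0)"
    by (intro rc_if rcp_eq rcp_and b rc_pfst rc_proj rc_const rc_Suc rc_len rc_psnd rc_tab rc_pred) auto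
  then show ?thesis by (rule rc_cong) (simp add: Fc_def)
qed

lemma rc_Fc: "rc n f \<Longrightarrow> rc n g \<Longrightarrow> rc n (\<lambda>xs. Fc ar (f xs) (g xs))"
  using rc_comp2[OF rc_Fc2] by simp



definition chiW :: "nat list \<Rightarrow> nat \<Rightarrow> nat" where "chiW ar x = (if x \<in> W ar then 1 else 0)"

primrec Hf :: "nat list \<Rightarrow> nat \<Rightarrow> nat" where
  "Hf ar 0 = 0"
| "Hf ar (Suc x) = Hf ar x + 2 ^ x * chiW ar x"

lemma chiW_le: "chiW ar x \<le> 1" by (simp add: chiW_def)

lemma Hf_less: "Hf ar x < 2 ^ x"
proof (induction x)
  case (Suc x)
  then show ?case by (simp add: chiW_def)
qed simp

lemma Hf_split: "y < x \<Longrightarrow> \<exists>R. Hf ar x = Hf ar y + 2 ^ y * chiW ar y + 2 ^ Suc y * R"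
proof (induction x)
  case 0 then show ?case by simp
next
  case (Suc x)
  show ?case
  proof (cases "y = x")
    case True then show ?thesis by (intro exI[of _ 0]) simp
  next
    case False
    then have "y < x" using Suc by simp
    then obtain R where R: "Hf ar x = Hf ar y + 2 ^ y * chiW ar y + 2 ^ Suc y * R" using Suc by blast
    have "x = Suc y + (x - Suc y)" using `y < x` by simp
    then have "(2::nat) ^ x = 2 ^ Suc y * 2 ^ (x - Suc y)" by (metis power_add)
    then have "Hf ar (Suc x) = Hf ar y + 2 ^ y * chiW ar y + 2 ^ Suc y * (R + 2 ^ (x - Suc y) * chiW ar x)"
      using R by (simp add: algebra_simps)
    then show ?thesis by blast
  qed
qed

lemma Hf_bit: "y < x \<Longrightarrow> Hf ar x div 2 ^ y mod 2 = chiW ar y"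
proof -
  assume "y < x"
  then obtain R where R: "Hf ar x = Hf ar y + 2 ^ y * chiW ar y + 2 ^ Suc y * R" using Hf_split by blast
  have "Hf ar x = Hf ar y + 2 ^ y * (chiW ar y + 2 * R)" using R by (simp add: algebra_simps)
  then have "Hf ar x div 2 ^ y = Hf ar y div 2 ^ y + (chiW ar y + 2 * R)"
    by simp
  also have "Hf ar y div 2 ^ y = 0" using Hf_less[of ar y] by simp
  finally have "Hf ar x div 2 ^ y = chiW ar y + 2 * R" by simp
  then show ?thesis using chiW_le[of ar y] by simp
qed

lemma Fc_correct: "Fc ar x (Hf ar x) = chiW ar x"
proof -
  obtain a l where al: "prod_decode x = (a, l)" by fastforce
  then have x: "x = prod_encode (a, l)" by (metis prod_decode_inverse)
  show ?thesis
  proof (cases a)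
    case 0 then show ?thesis using al W_char[of x ar] by (simp add: Fc_def chiW_def)
  next
    case (Suc c)
    let ?xs = "list_decode l"
    have lx: "l \<le> x" using x le_prod_encode_2 by simp
    have bits: "(\<forall>k<l. Tl k l \<noteq> 0 \<longrightarrow> Hf ar x div 2 ^ hd_c (Tl k l) mod 2 = 1) \<longleftrightarrow> (\<forall>y\<in>set ?xs. y \<in> W ar)"
    proof -
      have "(\<forall>k<l. Tl k l \<noteq> 0 \<longrightarrow> Hf ar x div 2 ^ hd_c (Tl k l) mod 2 = 1) \<longleftrightarrow>
            (\<forall>k<length ?xs. Hf ar x div 2 ^ (?xs ! k) mod 2 = 1)"
        using length_list_decode_le[of l] by (auto simp: Tl_zero_iff hd_c_Tl)
      also have "\<dots> \<longleftrightarrow> (\<forall>k<length ?xs. ?xs ! k \<in> W ar)"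
      proof -
        have "?xs ! k < x" if "k < length ?xs" for k
          using list_decode_elem_less[of "?xs ! k" l] that lx by simp
        then show ?thesis using Hf_bit by (auto simp: chiW_def)
      qed
      also have "\<dots> \<longleftrightarrow> (\<forall>y\<in>set ?xs. y \<in> W ar)" by (simp add: all_set_conv_all_nth)
      finally show ?thesis .
    qed
    have "Suc (length ?xs) = tab ar c \<longleftrightarrow> c < length ar \<and> length ?xs = ar ! c"
      by (auto simp: tab_def)
    then show ?thesis using al Suc W_char[of x ar] bits by (simp add: Fc_def chiW_def)
  qed
qed

lemma computable_Hf: "computable (Hf ar)"
proof (rule computable_rc)
  let ?h = "\<lambda>zs. zs ! 1 + 2 ^ (zs ! 0) * Fc ar (zs ! 0) (zs ! 1)"
  have "rc (Suc 0) (\<lambda>xs. prec_fun (\<lambda>_. 0) ?h (hd xs) (tl xs))"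
    by (rule rc_prec) (rule rc_const, intro rc_add rc_mult rc_pow rc_Fc rc_proj rc_const, auto)
  moreover have "prec_fun (\<lambda>_. 0) ?h a ys = Hf ar a" for a ys
    by (induction a) (auto simp: Fc_correct)
  ultimately show "rc 1 (\<lambda>xs. Hf ar (xs ! 0))"
    by (elim rc_cong2) (simp, auto elim: len1E)
qed

lemma computable_chiW: "computable (chiW ar)"
proof (rule computable_rc)
  have "rc 1 (\<lambda>xs. Fc ar (xs ! 0) (Hf ar (xs ! 0)))"
    by (intro rc_Fc rc_proj rc_computable[OF computable_Hf]) auto
  then show "rc 1 (\<lambda>xs. chiW ar (xs ! 0))" by (rule rc_cong) (simp add: Fc_correct)
qed

lemma rcp_W: "rc n f \<Longrightarrow> rcp n (\<lambda>xs. f xs \<in> W ar)"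
  unfolding rcp_def using rc_computable[OF computable_chiW] by (simp add: chiW_def)



definition good :: "nat list \<Rightarrow> nat \<Rightarrow> nat \<Rightarrow> bool" where
  "good ar n x \<longleftrightarrow> x < n \<and> x \<in> W ar"

definition tf :: "nat list \<Rightarrow> nat \<Rightarrow> nat \<Rightarrow> nat list \<Rightarrow> nat" where
  "tf ar n c vs = (if good ar n (prod_encode (Suc c, list_encode vs)) then prod_encode (Suc c, list_encode vs) else n)"

definition Mx :: "nat list \<Rightarrow> frm set \<Rightarrow> nat \<Rightarrow> fmatrix" where
  "Mx ar L n = \<lparr>nvals = Suc n, desig = {x. x < Suc n \<and> (\<not> good ar n x \<or> x \<in> frm_code ` L)}, tfun = tf ar n\<rparr>"

lemma children_W:
  assumes "prod_encode (Suc c, list_encode vs) \<in> W ar" "u \<in> set vs"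
  shows "u \<in> W ar \<and> u < prod_encode (Suc c, list_encode vs)"
proof -
  have "u \<in> W ar" using assms W_char[of "prod_encode (Suc c, list_encode vs)" ar] by auto
  moreover have "u < list_encode vs" using assms(2) by (rule list_encode_gt_elem)
  then have "u < prod_encode (Suc c, list_encode vs)" using le_prod_encode_2[of "list_encode vs" "Suc c"] by simp
  ultimately show ?thesis by simp
qed

lemma good_child: "good ar n (prod_encode (Suc c, list_encode vs)) \<Longrightarrow> u \<in> set vs \<Longrightarrow> good ar n u"
  using children_W[of c vs ar u] unfolding good_def by (meson less_trans)

lemma frm_code_inj: "frm_code \<phi> = frm_code \<psi> \<Longrightarrow> \<phi> = \<psi>"
proof (induction \<phi> arbitrary: \<psi>)
  case (Var i) then show ?case by (cases \<psi>) auto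
next
  case (App c fs)
  show ?case
  proof (cases \<psi>)
    case (Var j) then show ?thesis using App by simp
  next
    case (App d gs)
    then have cd: "c = d" and m: "map frm_code fs = map frm_code gs" using App.prems by (auto simp: list_encode_eq)
    have "length fs = length gs" using m by (metis length_map)
    moreover have "fs ! k = gs ! k" if "k < length fs" for k
    proof -
      have "frm_code (fs ! k) = frm_code (gs ! k)" using m that `length fs = length gs` by (metis nth_map)
      then show ?thesis using App.IH[of "fs ! k"] that by simp
    qed
    ultimately show ?thesis using cd App by (simp add: list_eq_iff_nth_eq)
  qed
qed

lemma val_range: "(\<forall>i. v i < Suc n) \<Longrightarrow> val (Mx ar L n) v \<phi> < Suc n"
  by (cases \<phi>) (auto simp: Mx_def tf_def good_def)

lemma sound:
  fixes v :: "nat \<Rightarrow> nat" and ar :: "nat list"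
  defines "\<sigma> \<equiv> (\<lambda>i. if v i \<in> W ar then inv_into (Frm ar) frm_code (v i) else Var 0)"
  shows "good ar n (val (Mx ar L n) v \<phi>) \<Longrightarrow> val (Mx ar L n) v \<phi> = frm_code (subst \<sigma> \<phi>)"
proof (induction \<phi>)
  case (Var i)
  then have "v i \<in> W ar" by (simp add: good_def)
  then show ?case by (simp add: \<sigma>_def W_def f_inv_into_f)
next
  case (App c fs)
  let ?a = "map (val (Mx ar L n) v) fs"
  let ?y = "prod_encode (Suc c, list_encode ?a)"
  have g: "good ar n ?y" using App.prems by (simp add: Mx_def tf_def good_def split: if_splits)
  then have vy: "val (Mx ar L n) v (App c fs) = ?y" by (simp add: Mx_def tf_def)
  have "val (Mx ar L n) v f = frm_code (subst \<sigma> f)" if "f \<in> set fs" for f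
  proof (rule App.IH[OF that])
    have "val (Mx ar L n) v f \<in> set ?a" using that by simp
    then show "good ar n (val (Mx ar L n) v f)" using g by (rule good_child[rotated])
  qed
  then have eq: "?a = map (\<lambda>f. frm_code (subst \<sigma> f)) fs" unfolding map_eq_conv by blast
  show ?case by (simp only: vy eq) (simp add: comp_def)
qed

lemma complete:
  assumes "wf_frm ar \<phi>"
  defines "n \<equiv> Suc (frm_code \<phi>)"
  defines "v \<equiv> (\<lambda>i. min (frm_code (Var i)) n)"
  shows "wf_frm ar \<psi> \<Longrightarrow> frm_code \<psi> < n \<Longrightarrow> val (Mx ar L n) v \<psi> = frm_code \<psi>"
proof (induction \<psi>)
  case (Var i) then show ?case by (simp add: v_def)
next
  case (App c fs)
  have "val (Mx ar L n) v f = frm_code f" if "f \<in> set fs" for f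
  proof (rule App.IH[OF that])
    show "wf_frm ar f" using App.prems that by simp
    have "frm_code f < list_encode (map frm_code fs)" using that by (intro list_encode_gt_elem) simp
    then have "frm_code f < frm_code (App c fs)" using le_prod_encode_2[of "list_encode (map frm_code fs)" "Suc c"] by simp
    then show "frm_code f < n" using App.prems by simp
  qed
  then have m: "map (val (Mx ar L n) v) fs = map frm_code fs" unfolding map_eq_conv by blast
  have "frm_code (App c fs) \<in> W ar" unfolding W_def Frm_def using App.prems(1) by (intro imageI) simp
  then have "good ar n (frm_code (App c fs))" using App.prems by (simp add: good_def)
  moreover have "val (Mx ar L n) v (App c fs) = tf ar n c (map frm_code fs)"
    by (simp only: val.simps m) (simp add: Mx_def)
  ultimately show ?case by (simp add: tf_def)
qed

lemma mono_val:
  assumes "m \<le> n" "\<forall>i. v i < Suc m"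
  shows "(good ar m (val (Mx ar L m) v \<phi>) \<longleftrightarrow> good ar m (val (Mx ar L n) v \<phi>)) \<and>
         (good ar m (val (Mx ar L m) v \<phi>) \<longrightarrow> val (Mx ar L m) v \<phi> = val (Mx ar L n) v \<phi>)"
proof (induction \<phi>)
  case (Var i) then show ?case by simp
next
  case (App c fs)
  let ?a = "map (val (Mx ar L m) v) fs"
  let ?b = "map (val (Mx ar L n) v) fs"
  let ?ya = "prod_encode (Suc c, list_encode ?a)"
  let ?yb = "prod_encode (Suc c, list_encode ?b)"
  have gm: "good ar m x \<Longrightarrow> good ar n x" for x using assms(1) by (auto simp: good_def)
  have ngm: "\<not> good ar m n" using assms(1) by (simp add: good_def)
  have va: "val (Mx ar L m) v (App c fs) = (if good ar m ?ya then ?ya else m)" by (simp add: Mx_def tf_def)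
  have vb: "val (Mx ar L n) v (App c fs) = (if good ar n ?yb then ?yb else n)" by (simp add: Mx_def tf_def)
  have A: "good ar m ?ya \<Longrightarrow> ?a = ?b"
  proof -
    assume ga: "good ar m ?ya"
    have "val (Mx ar L m) v f = val (Mx ar L n) v f" if "f \<in> set fs" for f
    proof -
      have "val (Mx ar L m) v f \<in> set ?a" using that by simp
      then have "good ar m (val (Mx ar L m) v f)" using ga by (rule good_child[rotated])
      then show ?thesis using App.IH[OF that] by blast
    qed
    then show ?thesis by simp
  qed
  have B: "good ar m ?yb \<Longrightarrow> ?a = ?b"
  proof -
    assume gb: "good ar m ?yb"
    have "val (Mx ar L m) v f = val (Mx ar L n) v f" if "f \<in> set fs" for f
    proof -
      have "val (Mx ar L n) v f \<in> set ?b" using that by simp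
      then have "good ar m (val (Mx ar L n) v f)" using gb by (rule good_child[rotated])
      then show ?thesis using App.IH[OF that] by blast
    qed
    then show ?thesis by simp
  qed
  show ?case
  proof (cases "good ar m ?ya")
    case True
    then have "?a = ?b" by (rule A)
    then have yy: "?ya = ?yb" by (simp only:)
    have "good ar n ?yb" using True yy gm by simp
    then show ?thesis using True va vb yy by simp
  next
    case False
    have "\<not> good ar m ?yb"
    proof
      assume "good ar m ?yb"
      then have "?a = ?b" by (rule B)
      then have "?ya = ?yb" by (simp only:)
      then show False using False `good ar m ?yb` by simp
    qed
    moreover have "\<not> good ar m m" by (simp add: good_def)
    ultimately show ?thesis using False va vb ngm by auto
  qed
qed

lemma Taut_mono:
  assumes "m \<le> n" shows "Taut ar (Mx ar L n) \<subseteq> Taut ar (Mx ar L m)"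
proof
  fix \<phi> assume \<phi>: "\<phi> \<in> Taut ar (Mx ar L n)"
  show "\<phi> \<in> Taut ar (Mx ar L m)" unfolding Taut_def
  proof (intro CollectI conjI allI impI)
    show "\<phi> \<in> Frm ar" using \<phi> by (simp add: Taut_def)
    fix v :: "nat \<Rightarrow> nat" assume v: "\<forall>i. v i < nvals (Mx ar L m)"
    then have vm: "\<forall>i. v i < Suc m" by (simp add: Mx_def)
    then have "\<forall>i. v i < nvals (Mx ar L n)" using assms by (auto simp: Mx_def intro: less_le_trans)
    then have dn: "val (Mx ar L n) v \<phi> \<in> desig (Mx ar L n)" using \<phi> by (simp add: Taut_def)
    have r: "val (Mx ar L m) v \<phi> < Suc m" using vm by (rule val_range)
    show "val (Mx ar L m) v \<phi> \<in> desig (Mx ar L m)"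
    proof (cases "good ar m (val (Mx ar L m) v \<phi>)")
      case True
      then have "good ar n (val (Mx ar L n) v \<phi>)" "val (Mx ar L m) v \<phi> = val (Mx ar L n) v \<phi>"
        using mono_val[OF assms vm, of ar L \<phi>] assms by (auto simp: good_def)
      then show ?thesis using dn r by (simp add: Mx_def)
    next
      case False then show ?thesis using r by (simp add: Mx_def)
    qed
  qed
qed



theorem corollary2:
  fixes ar :: "nat list" and L :: "frm set"
  assumes "is_logic ar L"
    and "decidable_logic L"
  shows "\<exists>Ms. seq_approx ar L Ms \<and> effective_seq ar Ms"
proof (intro exI conjI)
  let ?M = "Mx ar L"
  have LF: "L \<subseteq> Frm ar" and Lsub: "\<And>\<sigma> \<phi>. (\<forall>i. \<sigma> i \<in> Frm ar) \<Longrightarrow> \<phi> \<in> L \<Longrightarrow> subst \<sigma> \<phi> \<in> L"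
    using assms(1) unfolding is_logic_def by auto
  have inL: "frm_code \<phi> \<in> frm_code ` L \<longleftrightarrow> \<phi> \<in> L" for \<phi>
    using frm_code_inj by blast
  have LT: "L \<subseteq> Taut ar (?M n)" for n
  proof
    fix \<phi> assume \<phi>: "\<phi> \<in> L"
    show "\<phi> \<in> Taut ar (?M n)" unfolding Taut_def
    proof (intro CollectI conjI allI impI)
      show "\<phi> \<in> Frm ar" using \<phi> LF by auto
      fix v :: "nat \<Rightarrow> nat" assume "\<forall>i. v i < nvals (?M n)"
      then have v: "\<forall>i. v i < Suc n" by (simp add: Mx_def)
      define \<sigma> where "\<sigma> = (\<lambda>i. if v i \<in> W ar then inv_into (Frm ar) frm_code (v i) else Var 0)"
      have r: "val (?M n) v \<phi> < Suc n" using v by (rule val_range)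
      show "val (?M n) v \<phi> \<in> desig (?M n)"
      proof (cases "good ar n (val (?M n) v \<phi>)")
        case True
        then have e: "val (?M n) v \<phi> = frm_code (subst \<sigma> \<phi>)" unfolding \<sigma>_def by (rule sound)
        have "\<forall>i. \<sigma> i \<in> Frm ar"
        proof
          fix i show "\<sigma> i \<in> Frm ar"
          proof (cases "v i \<in> W ar")
            case True then show ?thesis unfolding \<sigma>_def W_def by (simp add: inv_into_into)
          next
            case False then show ?thesis unfolding \<sigma>_def by (simp add: Frm_def)
          qed
        qed
        then have "subst \<sigma> \<phi> \<in> L" using \<phi> by (rule Lsub)
        then show ?thesis using e r by (simp add: Mx_def)
      next
        case False then show ?thesis using r by (simp add: Mx_def)
      qed
    qed
  qed
  show "seq_approx ar L ?M" unfolding seq_approx_def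
  proof (intro conjI allI impI)
    fix j show "is_matrix ar (?M j)"
      by (auto simp: is_matrix_def Mx_def tf_def good_def)
  next
    fix i j :: nat assume "j \<le> i" then show "Taut ar (?M i) \<subseteq> Taut ar (?M j)" by (rule Taut_mono)
  next
    show "L = (\<Inter>j. Taut ar (?M j))"
    proof
      show "L \<subseteq> (\<Inter>j. Taut ar (?M j))" using LT by blast
    next
      show "(\<Inter>j. Taut ar (?M j)) \<subseteq> L"
      proof
        fix \<phi> assume H: "\<phi> \<in> (\<Inter>j. Taut ar (?M j))"
        then have wf: "wf_frm ar \<phi>" by (auto simp: Taut_def Frm_def)
        show "\<phi> \<in> L"
        proof (rule ccontr)
          assume nL: "\<phi> \<notin> L"
          define n where "n = Suc (frm_code \<phi>)"
          define v where "v = (\<lambda>i. min (frm_code (Var i)) n)"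
          have e: "val (?M n) v \<phi> = frm_code \<phi>"
            unfolding n_def v_def using wf wf by (rule complete) simp
          have "\<forall>i. v i < nvals (?M n)" by (simp add: v_def Mx_def min_def)
          moreover have "\<phi> \<in> Taut ar (?M n)" using H by blast
          ultimately have "val (?M n) v \<phi> \<in> desig (?M n)" by (simp add: Taut_def)
          moreover have "good ar n (frm_code \<phi>)"
            using wf unfolding good_def n_def W_def Frm_def by auto
          ultimately show False using e nL inL by (simp add: Mx_def)
        qed
      qed
    qed
  qed
  have cL: "computable (\<lambda>x. if x \<in> frm_code ` L then 1 else 0)"
    using assms(2) unfolding decidable_logic_def decidable_set_def .
  have rcpL: "rc n f \<Longrightarrow> rcp n (\<lambda>xs. f xs \<in> frm_code ` L)" for n f
    unfolding rcp_def by (rule rc_computable[OF cL])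
  show "effective_seq ar ?M" unfolding effective_seq_def
  proof (intro conjI)
    show "computable (\<lambda>i. nvals (?M i))"
      by (rule computable_rc) (simp add: Mx_def, intro rc_Suc rc_proj, simp)
  next
    have "rc 1 (\<lambda>xs. if snd (prod_decode (xs ! 0)) < Suc (fst (prod_decode (xs ! 0))) \<and>
        (\<not> (snd (prod_decode (xs ! 0)) < fst (prod_decode (xs ! 0)) \<and> snd (prod_decode (xs ! 0)) \<in> W ar)
         \<or> snd (prod_decode (xs ! 0)) \<in> frm_code ` L) then 1 else 0)"
      by (intro rc_if rcp_and rcp_or rcp_not rcp_less rcp_W rcpL rc_psnd rc_pfst rc_Suc rc_proj rc_const) auto
    then show "computable (\<lambda>p. if snd (prod_decode p) \<in> desig (?M (fst (prod_decode p))) then 1 else 0)"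
      by (intro computable_rc) (simp add: Mx_def good_def)
  next
    define g where "g = (\<lambda>p. if prod_encode (Suc (fst (prod_decode (snd (prod_decode p)))), snd (prod_decode (snd (prod_decode p))))
         < fst (prod_decode p) \<and> prod_encode (Suc (fst (prod_decode (snd (prod_decode p)))), snd (prod_decode (snd (prod_decode p)))) \<in> W ar
       then prod_encode (Suc (fst (prod_decode (snd (prod_decode p)))), snd (prod_decode (snd (prod_decode p))))
       else fst (prod_decode p))"
    have "computable g" unfolding g_def
      by (rule computable_rc)
         (intro rc_if rcp_and rcp_less rcp_W rc_penc rc_Suc rc_pfst rc_psnd rc_proj, auto)
    moreover have "\<forall>i c vs. c < length ar \<and> length vs = ar ! c \<and> set vs \<subseteq> {..<nvals (?M i)}
           \<longrightarrow> g (prod_encode (i, prod_encode (c, list_encode vs))) = tfun (?M i) c vs"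
      by (simp add: g_def Mx_def tf_def good_def)
    ultimately show "\<exists>g. computable g \<and>
        (\<forall>i c vs. c < length ar \<and> length vs = ar ! c \<and> set vs \<subseteq> {..<nvals (?M i)}
           \<longrightarrow> g (prod_encode (i, prod_encode (c, list_encode vs))) = tfun (?M i) c vs)" by blast
  qed
qed

end
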